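(* Let $\|\cdot\|$ be a norm on $\mathbb{R}^d$, $\epsilon>0$, and $A\subseteq\mathbb{R}^d$. Then $$A=(A^{-\epsilon})^\epsilon\sqcup F(A),\qquad (A^\epsilon)^{-\epsilon}=A\sqcup F(A^C),$$ where $\sqcup$ denotes disjoint union.
   Context: $\overline{B_\epsilon(\mathbf a)}=\{\mathbf z:\|\mathbf z-\mathbf a\|\le\epsilon\}$; $A^\epsilon=\bigcup_{\mathbf a\in A}\overline{B_\epsilon(\mathbf a)}$ ($=A\oplus\overline{B_\epsilon(\mathbf 0)}$) and $A^{-\epsilon}=((A^C)^\epsilon)^C$. For a set $S$, $F(S)=\{\mathbf x\in S:\text{every closed }\epsilon\text{-ball }\overline{B_\epsilon(\mathbf y)}\text{ containing }\mathbf x\text{ also intersects }S^C\}$. *)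

theory Defs
  imports "HOL-Analysis.Analysis"
begin

definition is_norm :: "(real^'d \<Rightarrow> real) \<Rightarrow> bool" where
  "is_norm N \<longleftrightarrow> (\<forall>x. 0 \<le> N x) \<and> (\<forall>x. N x = 0 \<longleftrightarrow> x = 0)
     \<and> (\<forall>c x. N (c *\<^sub>R x) = \<bar>c\<bar> * N x) \<and> (\<forall>x y. N (x + y) \<le> N x + N y)"

definition ncball :: "(real^'d \<Rightarrow> real) \<Rightarrow> real^'d \<Rightarrow> real \<Rightarrow> (real^'d) set" where
  "ncball N a e = {z. N (z - a) \<le> e}"

definition dilate :: "(real^'d \<Rightarrow> real) \<Rightarrow> real \<Rightarrow> (real^'d) set \<Rightarrow> (real^'d) set" where
  "dilate N e A = (\<Union>a\<in>A. ncball N a e)"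

definition erode :: "(real^'d \<Rightarrow> real) \<Rightarrow> real \<Rightarrow> (real^'d) set \<Rightarrow> (real^'d) set" where
  "erode N e A = - dilate N e (- A)"

definition Fset :: "(real^'d \<Rightarrow> real) \<Rightarrow> real \<Rightarrow> (real^'d) set \<Rightarrow> (real^'d) set" where
  "Fset N e S = {x \<in> S. \<forall>y. x \<in> ncball N y e \<longrightarrow> ncball N y e \<inter> - S \<noteq> {}}"

end

theory Submission
  imports Defs
begin

lemma nsym: assumes "is_norm N" shows "N (a - b) = N (b - a)"
proof -
  have "N ((-1) *\<^sub>R (b - a)) = \<bar>-1\<bar> * N (b - a)" using assms unfolding is_norm_def by blast
  then show ?thesis by simp
qed

lemma erode_char: assumes "is_norm N"
  shows "x \<in> erode N e A \<longleftrightarrow> ncball N x e \<subseteq> A"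
  unfolding erode_def dilate_def ncball_def using nsym[OF assms] by auto

lemma dil_char: "x \<in> dilate N e A \<longleftrightarrow> (\<exists>a\<in>A. x \<in> ncball N a e)"
  unfolding dilate_def by auto

theorem lemma20:
  fixes N :: "real^'d \<Rightarrow> real" and e :: real and A :: "(real^'d) set"
  assumes "is_norm N" and "e > 0"
  shows "A = dilate N e (erode N e A) \<union> Fset N e A
         \<and> dilate N e (erode N e A) \<inter> Fset N e A = {}
         \<and> erode N e (dilate N e A) = A \<union> Fset N e (- A)
         \<and> A \<inter> Fset N e (- A) = {}"
proof -
  have c1: "x \<in> dilate N e (erode N e A) \<longleftrightarrow> (\<exists>y. ncball N y e \<subseteq> A \<and> x \<in> ncball N y e)" for x
    using erode_char[OF assms(1)] dil_char by metis
  have c2: "x \<in> erode N e (dilate N e A) \<longleftrightarrow> (\<forall>y. x \<in> ncball N y e \<longrightarrow> ncball N y e \<inter> A \<noteq> {})" for x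
  proof -
    have "x \<in> erode N e (dilate N e A) \<longleftrightarrow> ncball N x e \<subseteq> dilate N e A"
      by (rule erode_char[OF assms(1)])
    also have "\<dots> \<longleftrightarrow> (\<forall>y. x \<in> ncball N y e \<longrightarrow> ncball N y e \<inter> A \<noteq> {})"
    proof -
      have "ncball N x e \<subseteq> dilate N e A \<longleftrightarrow> (\<forall>y. N (y - x) \<le> e \<longrightarrow> (\<exists>a\<in>A. N (y - a) \<le> e))"
        unfolding subset_iff dilate_def ncball_def by auto
      moreover have "(\<forall>y. x \<in> ncball N y e \<longrightarrow> ncball N y e \<inter> A \<noteq> {}) \<longleftrightarrow> (\<forall>y. N (x - y) \<le> e \<longrightarrow> (\<exists>a\<in>A. N (a - y) \<le> e))"
        unfolding ncball_def by auto
      ultimately show ?thesis using nsym[OF assms(1)] by metis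
    qed
    finally show ?thesis .
  qed
  show ?thesis
    unfolding Fset_def using c1 c2 by blast
qed

end
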